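(* Let $d \ge 1$, $\mathcal{X}=\{0,1\}^d$, $p_+, p_- \in (0,1)$, and let $\phi$ be the randomization on $\mathcal{X}$ that, independently for each coordinate $i$, flips $x_i$ with probability $p_-$ if $x_i = 1$ and with probability $p_+$ if $x_i = 0$, i.e. $\Pr(\phi(x)_i \ne x_i) = p_-^{x_i} p_+^{1-x_i}$. Let $r_a, r_d \ge 0$ be integers, $x \in \mathcal{X}$, $\tilde{x} \in \mathcal{S}_{r_a,r_d}(x)$, $\mathcal{C} = \{i : x_i \ne \tilde{x}_i\}$, and for $q \ge 0$ let $\mathcal{R}_q^{r_a,r_d} = \{ z \in \mathcal{X} : \|x_{\mathcal{C}} - z_{\mathcal{C}}\|_0 = q,\ \|\mathbf{1}-x_{\mathcal{C}}\|_0 = r_a,\ \|x_{\mathcal{C}}\|_0 = r_d \}$. Then for every $q$ and every $z \in \mathcal{R}_q^{r_a,r_d}$, $$\eta_q^{r_a,r_d} := \frac{\Pr(\phi(x) = z)}{\Pr(\phi(\tilde{x}) = z)} = \left[\frac{p_+}{1-p_-}\right]^{q-r_d}\left[\frac{p_-}{1-p_+}\right]^{q-r_a},$$ which in particular is constant on $\mathcal{R}_q^{r_a,r_d}$. Moreover, for fixed $r_a, r_d$, $\eta_q^{r_a,r_d}$ is a monotonically decreasing function of $q$ if $p_- + p_+ < 1$, constant in $q$ if $p_- + p_+ = 1$, and monotonically increasing in $q$ if $p_- + p_+ > 1$.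
   Context: For $x \in \{0,1\}^d$, $\mathcal{S}_{r_a,r_d}(x)$ is the set of $\tilde{x} \in \{0,1\}^d$ with $\sum_i \mathbb{I}(\tilde{x}_i = x_i - 1) = r_d$ and $\sum_i \mathbb{I}(\tilde{x}_i = x_i + 1) = r_a$ (obtained from $x$ by deleting exactly $r_d$ ones and adding exactly $r_a$ ones). $x_{\mathcal{C}}$ is the restriction of $x$ to the coordinates in $\mathcal{C}$, $\|\cdot\|_0$ counts nonzero entries, $\mathbf{1}$ is the all-ones vector. *)

theory Defs
  imports "HOL-Probability.Probability"
begin

text \<open>Binary vectors in {0,1}^d are represented as functions nat => bool
  (True = 1) that are False outside {..<d}.\<close>

definition cube :: "nat \<Rightarrow> (nat \<Rightarrow> bool) set" where
  "cube d = {x. \<forall>i. d \<le> i \<longrightarrow> \<not> x i}"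

definition phi :: "nat \<Rightarrow> real \<Rightarrow> real \<Rightarrow> (nat \<Rightarrow> bool) \<Rightarrow> (nat \<Rightarrow> bool) pmf" where
  "phi d pp pm x = Pi_pmf {..<d} False
     (\<lambda>i. map_pmf (\<lambda>flip. if flip then \<not> x i else x i)
                   (bernoulli_pmf (if x i then pm else pp)))"

definition S_set :: "nat \<Rightarrow> nat \<Rightarrow> nat \<Rightarrow> (nat \<Rightarrow> bool) \<Rightarrow> (nat \<Rightarrow> bool) set" where
  "S_set d ra rd x = {xt \<in> cube d.
      card {i\<in>{..<d}. x i \<and> \<not> xt i} = rd \<and> card {i\<in>{..<d}. \<not> x i \<and> xt i} = ra}"

definition R_set :: "nat \<Rightarrow> nat set \<Rightarrow> (nat \<Rightarrow> bool) \<Rightarrow> nat \<Rightarrow> nat \<Rightarrow> nat \<Rightarrow> (nat \<Rightarrow> bool) set" where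
  "R_set d C x q ra rd = {z \<in> cube d.
      card {i\<in>C. x i \<noteq> z i} = q \<and> card {i\<in>C. \<not> x i} = ra \<and> card {i\<in>C. x i} = rd}"

definition eta :: "real \<Rightarrow> real \<Rightarrow> nat \<Rightarrow> nat \<Rightarrow> nat \<Rightarrow> real" where
  "eta pp pm ra rd q =
     (pp / (1 - pm)) powi (int q - int rd) * (pm / (1 - pp)) powi (int q - int ra)"

end

theory Submission
  imports Defs
begin

lemma coord_pmf:
  assumes "0 \<le> p" "p \<le> 1"
  shows "pmf (map_pmf (\<lambda>flip. if flip then \<not> b else b) (bernoulli_pmf p)) c
         = (if c = b then 1 - p else p)"
proof -
  have "(\<lambda>flip. if flip then \<not> b else b) -` {c} = (if c = b then {False} else {True})"
    by auto
  then show ?thesis using assms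
    by (simp add: pmf_map measure_pmf_single)
qed

definition F :: "real \<Rightarrow> real \<Rightarrow> bool \<Rightarrow> bool \<Rightarrow> real" where
  "F pp pm b c = (if c = b then 1 - (if b then pm else pp) else (if b then pm else pp))"

lemma pmf_phi:
  assumes "0 < pp" "pp < 1" "0 < pm" "pm < 1" "z \<in> cube d"
  shows "pmf (phi d pp pm y) z = (\<Prod>i\<in>{..<d}. F pp pm (y i) (z i))"
proof -
  have "\<forall>i. i \<notin> {..<d} \<longrightarrow> z i = False" using assms(5) by (auto simp: cube_def)
  then show ?thesis unfolding phi_def using assms
    by (simp add: pmf_Pi coord_pmf F_def)
qed

lemma F_pos:
  assumes "0 < pp" "pp < 1" "0 < pm" "pm < 1"
  shows "F pp pm b c > 0"
  using assms by (auto simp: F_def)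

lemma eta_alt:
  assumes "0 < pp" "pp < 1" "0 < pm" "pm < 1"
  shows "eta pp pm ra rd q = ((pp / (1 - pm)) * (pm / (1 - pp))) ^ q *
            ((pp / (1 - pm)) powi (- int rd) * (pm / (1 - pp)) powi (- int ra))"
proof -
  let ?A = "pp / (1 - pm)" and ?B = "pm / (1 - pp)"
  have A: "?A \<noteq> 0" and B: "?B \<noteq> 0" using assms by auto
  have e1: "?A powi (int q - int rd) = ?A powi int q * ?A powi (- int rd)"
    using power_int_add[of ?A "int q" "- int rd"] A by simp
  have e2: "?B powi (int q - int ra) = ?B powi int q * ?B powi (- int ra)"
    using power_int_add[of ?B "int q" "- int ra"] B by simp
  have "eta pp pm ra rd q = (?A powi int q * ?A powi (- int rd)) * (?B powi int q * ?B powi (- int ra))"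
    unfolding eta_def e1 e2 by simp
  also have "\<dots> = (?A * ?B) ^ q * (?A powi (- int rd) * ?B powi (- int ra))"
    unfolding power_mult_distrib power_int_of_nat by (simp add: mult_ac)
  finally show ?thesis .
qed

theorem proposition3:
  fixes d ra rd :: nat and pp pm :: real and x xt :: "nat \<Rightarrow> bool"
  assumes "d \<ge> 1"
    and "0 < pp" "pp < 1" "0 < pm" "pm < 1"
    and "x \<in> cube d"
    and "xt \<in> S_set d ra rd x"
  defines "C \<equiv> {i\<in>{..<d}. x i \<noteq> xt i}"
  shows "(\<forall>q z. z \<in> R_set d C x q ra rd \<longrightarrow>
            pmf (phi d pp pm x) z / pmf (phi d pp pm xt) z = eta pp pm ra rd q)
       \<and> (pm + pp < 1 \<longrightarrow> antimono (eta pp pm ra rd))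
       \<and> (pm + pp = 1 \<longrightarrow> (\<forall>q. eta pp pm ra rd q = eta pp pm ra rd 0))
       \<and> (pm + pp > 1 \<longrightarrow> mono (eta pp pm ra rd))"
proof (intro conjI allI impI)
  note p = assms(2-5)
  let ?A = "pp / (1 - pm)" and ?B = "pm / (1 - pp)"
  have A0: "?A > 0" and B0: "?B > 0" using p by auto
  define K where "K = ?A powi (- int rd) * ?B powi (- int ra)"
  have K0: "K > 0" unfolding K_def using A0 B0 by auto
  have et: "\<And>q. eta pp pm ra rd q = (?A * ?B) ^ q * K"
    unfolding K_def using eta_alt[OF p] by simp
  have AB0: "?A * ?B \<ge> 0" by (rule less_imp_le[OF mult_pos_pos[OF A0 B0]])
  have ABlt: "?A * ?B < 1 \<longleftrightarrow> pm + pp < 1"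
  proof -
    have "?A * ?B = (pp * pm) / ((1 - pm) * (1 - pp))" by simp
    moreover have "(1 - pm) * (1 - pp) > 0" using p by simp
    ultimately have "?A * ?B < 1 \<longleftrightarrow> pp * pm < (1 - pm) * (1 - pp)"
      using p by (simp add: divide_less_eq)
    also have "\<dots> \<longleftrightarrow> pm + pp < 1" by (simp add: algebra_simps)
    finally show ?thesis .
  qed
  have ABeq: "?A * ?B = 1 \<longleftrightarrow> pm + pp = 1"
  proof -
    have "?A * ?B = (pp * pm) / ((1 - pm) * (1 - pp))" by simp
    moreover have "(1 - pm) * (1 - pp) > 0" using p by simp
    ultimately have "?A * ?B = 1 \<longleftrightarrow> pp * pm = (1 - pm) * (1 - pp)"
      using p by (simp add: divide_eq_eq)
    also have "\<dots> \<longleftrightarrow> pm + pp = 1" by (simp add: algebra_simps)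
    finally show ?thesis .
  qed
  {
    assume "pm + pp < 1"
    then have "?A * ?B \<le> 1" using ABlt by simp
    then show "antimono (eta pp pm ra rd)" unfolding antimono_def et
      using K0 AB0 by (auto intro!: mult_right_mono power_decreasing)
  }
  {
    fix q
    assume "pm + pp = 1"
    then have h: "?A * ?B = 1" using ABeq by simp
    show "eta pp pm ra rd q = eta pp pm ra rd 0" unfolding et by (simp only: h power_one)
  }
  {
    assume "pm + pp > 1"
    then have "?A * ?B \<ge> 1" using ABlt by linarith
    then show "mono (eta pp pm ra rd)" unfolding mono_def et
      using K0 by (auto intro!: mult_right_mono power_increasing)
  }
  fix q z
  assume zR: "z \<in> R_set d C x q ra rd"
  then have zc: "z \<in> cube d" and cq: "card {i\<in>C. x i \<noteq> z i} = q"
    and cra: "card {i\<in>C. \<not> x i} = ra" and crd: "card {i\<in>C. x i} = rd"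
    by (auto simp: R_set_def)
  define r where "r i = F pp pm (x i) (z i) / F pp pm (xt i) (z i)" for i
  have fin: "finite C" unfolding C_def by simp
  have Csub: "C \<subseteq> {..<d}" unfolding C_def by auto
  have "pmf (phi d pp pm x) z / pmf (phi d pp pm xt) z = (\<Prod>i\<in>{..<d}. r i)"
    unfolding pmf_phi[OF p zc] r_def by (simp add: prod_dividef)
  also have "\<dots> = (\<Prod>i\<in>C. r i) * (\<Prod>i\<in>{..<d} - C. r i)"
    using prod.subset_diff[OF Csub] by (simp add: mult.commute)
  also have "(\<Prod>i\<in>{..<d} - C. r i) = 1"
  proof (rule prod.neutral, intro ballI)
    fix i assume "i \<in> {..<d} - C"
    then have "x i = xt i" unfolding C_def by auto
    then show "r i = 1" unfolding r_def using F_pos[OF p, of "xt i" "z i"] by simp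
  qed
  finally have eq1: "pmf (phi d pp pm x) z / pmf (phi d pp pm xt) z = (\<Prod>i\<in>C. r i)" by simp
  define C11 where "C11 = {i\<in>C. x i \<and> z i}"
  define C10 where "C10 = {i\<in>C. x i \<and> \<not> z i}"
  define C01 where "C01 = {i\<in>C. \<not> x i \<and> z i}"
  define C00 where "C00 = {i\<in>C. \<not> x i \<and> \<not> z i}"
  have f: "finite C11" "finite C10" "finite C01" "finite C00"
    using fin unfolding C11_def C10_def C01_def C00_def by auto
  have xtC: "\<And>i. i \<in> C \<Longrightarrow> xt i = (\<not> x i)" unfolding C_def by auto
  have r11: "\<And>i. i \<in> C11 \<Longrightarrow> r i = 1 / ?A" unfolding C11_def r_def F_def using xtC by auto
  have r10: "\<And>i. i \<in> C10 \<Longrightarrow> r i = ?B" unfolding C10_def r_def F_def using xtC by auto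
  have r01: "\<And>i. i \<in> C01 \<Longrightarrow> r i = ?A" unfolding C01_def r_def F_def using xtC by auto
  have r00: "\<And>i. i \<in> C00 \<Longrightarrow> r i = 1 / ?B" unfolding C00_def r_def F_def using xtC by auto
  have Cu: "C = ((C11 \<union> C10) \<union> C01) \<union> C00" unfolding C11_def C10_def C01_def C00_def by auto
  have "(\<Prod>i\<in>C. r i) = (\<Prod>i\<in>C11. r i) * (\<Prod>i\<in>C10. r i) * (\<Prod>i\<in>C01. r i) * (\<Prod>i\<in>C00. r i)"
  proof -
    have dj: "C11 \<inter> C10 = {}" "(C11 \<union> C10) \<inter> C01 = {}" "((C11 \<union> C10) \<union> C01) \<inter> C00 = {}"
      unfolding C11_def C10_def C01_def C00_def by auto
    show ?thesis unfolding Cu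
      using prod.union_disjoint[OF _ _ dj(3), of r] prod.union_disjoint[OF _ _ dj(2), of r]
        prod.union_disjoint[OF _ _ dj(1), of r] f by simp
  qed
  also have "\<dots> = (1/?A) ^ card C11 * ?B ^ card C10 * ?A ^ card C01 * (1/?B) ^ card C00"
    using r11 r10 r01 r00 by simp
  finally have eq2: "(\<Prod>i\<in>C. r i) = (1/?A) ^ card C11 * ?B ^ card C10 * ?A ^ card C01 * (1/?B) ^ card C00" .
  have d1: "{i\<in>C. x i \<noteq> z i} = C10 \<union> C01" unfolding C10_def C01_def by auto
  have d2: "{i\<in>C. x i} = C11 \<union> C10" unfolding C11_def C10_def by auto
  have d3: "{i\<in>C. \<not> x i} = C01 \<union> C00" unfolding C01_def C00_def by auto
  have q: "q = card C10 + card C01" unfolding cq[symmetric] d1 using f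
    by (subst card_Un_disjoint, auto simp: C10_def C01_def)
  have rd: "rd = card C11 + card C10" unfolding crd[symmetric] d2 using f
    by (subst card_Un_disjoint, auto simp: C11_def C10_def)
  have ra: "ra = card C01 + card C00" unfolding cra[symmetric] d3 using f
    by (subst card_Un_disjoint, auto simp: C01_def C00_def)
  have "eta pp pm ra rd q = ?A powi (int (card C01) - int (card C11)) * ?B powi (int (card C10) - int (card C00))"
    unfolding eta_def q rd ra by (simp add: algebra_simps)
  also have "\<dots> = (?A ^ card C01 / ?A ^ card C11) * (?B ^ card C10 / ?B ^ card C00)"
  proof -
    have a: "?A \<noteq> 0" and b: "?B \<noteq> 0" using A0 B0 by linarith+
    show ?thesis
      unfolding power_int_diff[OF disjI1[OF a]] power_int_diff[OF disjI1[OF b]] power_int_of_nat ..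
  qed
  also have "\<dots> = (1/?A) ^ card C11 * ?B ^ card C10 * ?A ^ card C01 * (1/?B) ^ card C00"
    by (simp add: power_one_over field_simps)
  finally show "pmf (phi d pp pm x) z / pmf (phi d pp pm xt) z = eta pp pm ra rd q"
    using eq1 eq2 by simp
qed

end
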